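(* Let $B$ be an $n\times N$ complex matrix, let $x_1,\dots,x_N\in\mathbb{C}^n$ be its columns and $w_1,\dots,w_n\in\mathbb{C}^N$ its rows, and fix an integer $k\ge1$. For every tuple $(k_1,\dots,k_n)$ of nonnegative integers with $k_1+\dots+k_n=k$ put $$u_{(k_1,\dots,k_n)} = \sqrt{\tbinom{k}{k_1,\dots,k_n}}\; w_1^{(k_1)}\circ w_2^{(k_2)}\circ\cdots\circ w_n^{(k_n)}\in\mathbb{C}^N,\qquad \tbinom{k}{k_1,\dots,k_n}=\frac{k!}{k_1!\cdots k_n!}.$$ Then $\binom{n+k-1}{k}\sum_{i,j}|\langle x_i|x_j\rangle|^{2k} = \big(\sum_i\langle x_i|x_i\rangle^k\big)^2$ if and only if the vectors $u_{(k_1,\dots,k_n)}$ (over all such tuples) all have the same length and are pairwise orthogonal (vectors indexed by distinct tuples being orthogonal).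
   Context: For vectors (or matrices) of equal size, the Schur product $a\circ b$ is the entrywise product, and the Schur power $a^{(m)}$ is the entrywise $m$-th power (with $a^{(0)}$ the all-ones vector). $\langle x|y\rangle=\sum_t\overline{x_t}y_t$. *)

theory Defs
  imports "HOL-Analysis.Analysis"
begin

definition cinner :: "complex^'m \<Rightarrow> complex^'m \<Rightarrow> complex" where
  "cinner x y = (\<Sum>t\<in>UNIV. cnj (x $ t) * y $ t)"

definition clen :: "complex^'m \<Rightarrow> real" where
  "clen x = sqrt (\<Sum>t\<in>UNIV. (cmod (x $ t))\<^sup>2)"

text \<open>Schur power (a^(0) is the all-ones vector); the Schur product of several
  vectors is written entrywise as a product of entries.\<close>

definition schur_pow :: "complex^'m \<Rightarrow> nat \<Rightarrow> complex^'m" where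
  "schur_pow a m = (\<chi> t. (a $ t) ^ m)"

definition tuples :: "nat \<Rightarrow> ('n::finite \<Rightarrow> nat) set" where
  "tuples k = {\<kappa>. (\<Sum>r\<in>UNIV. \<kappa> r) = k}"

definition multinom :: "nat \<Rightarrow> ('n::finite \<Rightarrow> nat) \<Rightarrow> real" where
  "multinom k \<kappa> = fact k / (\<Prod>r\<in>UNIV. fact (\<kappa> r))"

text \<open>u_kappa = sqrt(multinomial) * (Schur product over rows r of w_r^(kappa_r)),
  where w_r = B $ r is the r-th row of B.\<close>
definition uvec :: "complex^'N^'n::finite \<Rightarrow> nat \<Rightarrow> ('n \<Rightarrow> nat) \<Rightarrow> complex^'N" where
  "uvec B k \<kappa> = (\<chi> t. complex_of_real (sqrt (multinom k \<kappa>)) *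
        (\<Prod>r\<in>UNIV. (schur_pow (B $ r) (\<kappa> r)) $ t))"

end

theory Submission
  imports Defs
begin

definition TT :: "'n set \<Rightarrow> nat \<Rightarrow> ('n::finite \<Rightarrow> nat) set" where
  "TT I k = {\<kappa>. (\<forall>r. r \<notin> I \<longrightarrow> \<kappa> r = 0) \<and> sum \<kappa> I = k}"

lemma TT_finite: "finite (TT I k)"
proof -
  have "TT I k \<subseteq> PiE UNIV (\<lambda>_. {..k})"
  proof
    fix \<kappa> assume "\<kappa> \<in> TT I k"
    hence "\<forall>r. \<kappa> r \<le> k"
      unfolding TT_def by (metis (mono_tags, lifting) finite mem_Collect_eq member_le_sum zero_le)
    thus "\<kappa> \<in> PiE UNIV (\<lambda>_. {..k})" by auto
  qed
  thus ?thesis by (rule finite_subset) (rule finite_PiE, auto)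
qed

lemma TT_UNIV: "TT UNIV k = tuples k"
  unfolding TT_def tuples_def by auto

lemma TT_empty: "TT {} k = (if k = 0 then {\<lambda>_. 0} else {})"
  unfolding TT_def by auto

lemma TT_insert_sum:
  assumes "x \<notin> I"
  shows "sum f (TT (insert x I) k) = (\<Sum>j\<le>k. \<Sum>\<kappa>\<in>TT I (k - j). f (\<kappa>(x := j)))"
proof -
  have fin: "finite I" by simp
  have "sum f (TT (insert x I) k) = sum (\<lambda>(j,\<kappa>). f (\<kappa>(x := j))) (Sigma {..k} (\<lambda>j. TT I (k - j)))"
  proof (rule sum.reindex_bij_witness[where i="\<lambda>(j,\<kappa>). \<kappa>(x := j)" and j="\<lambda>\<kappa>. (\<kappa> x, \<kappa>(x := 0))"])
    fix a assume a: "a \<in> Sigma {..k} (\<lambda>j. TT I (k - j))"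
    then obtain j \<kappa> where a': "a = (j, \<kappa>)" "j \<le> k" "\<kappa> \<in> TT I (k - j)" by auto
    hence kx: "\<kappa> x = 0" using assms unfolding TT_def by auto
    show "(\<lambda>\<kappa>. (\<kappa> x, \<kappa>(x := 0))) ((\<lambda>(j, \<kappa>). \<kappa>(x := j)) a) = a"
      using a' kx by (auto simp: fun_eq_iff)
    have "sum (\<kappa>(x := j)) I = sum \<kappa> I" using assms by (intro sum.cong) auto
    thus "(\<lambda>(j, \<kappa>). \<kappa>(x := j)) a \<in> TT (insert x I) k"
      using a' assms fin unfolding TT_def by auto
  next
    fix b assume b: "b \<in> TT (insert x I) k"
    show "(\<lambda>(j, \<kappa>). \<kappa>(x := j)) ((\<lambda>\<kappa>. (\<kappa> x, \<kappa>(x := 0))) b) = b" by auto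
    show "(\<lambda>(j, \<kappa>). f (\<kappa>(x := j))) ((\<lambda>\<kappa>. (\<kappa> x, \<kappa>(x := 0))) b) = f b" by auto
    have s: "sum b (insert x I) = b x + sum b I" using assms fin by simp
    have "sum (b(x := 0)) I = sum b I" using assms by (intro sum.cong) auto
    thus "(\<lambda>\<kappa>. (\<kappa> x, \<kappa>(x := 0))) b \<in> (Sigma {..k} (\<lambda>j. TT I (k - j)))"
      using b s unfolding TT_def by auto
  qed
  also have "\<dots> = (\<Sum>j\<le>k. \<Sum>\<kappa>\<in>TT I (k - j). f (\<kappa>(x := j)))"
    by (subst sum.Sigma) (auto simp: TT_finite)
  finally show ?thesis .
qed

lemma sum_rev_atMost: "(\<Sum>j\<le>k. g (k - j)) = (\<Sum>j\<le>(k::nat). g j)"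
  by (rule sum.reindex_bij_witness[where i="\<lambda>j. k - j" and j="\<lambda>j. k - j"]) auto

lemma TT_card: "card (TT (I::'n::finite set) k) = (card I + k - 1) choose k"
proof -
  have "finite I" by simp
  thus ?thesis
  proof (induction I arbitrary: k rule: finite_induct)
    case empty then show ?case by (simp add: TT_empty)
  next
    case (insert x I)
    have "card (TT (insert x I) k) = (\<Sum>j\<le>k. card (TT I (k - j)))"
      using TT_insert_sum[OF insert(2), of "\<lambda>_. 1::nat" k] by simp
    also have "\<dots> = (\<Sum>j\<le>k. (card I + (k - j) - 1) choose (k - j))" using insert by simp
    also have "\<dots> = (\<Sum>j\<le>k. (card I + j - 1) choose j)" by (rule sum_rev_atMost)
    also have "\<dots> = (card (insert x I) + k - 1) choose k"
    proof (cases "card I = 0")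
      case True
      have "(\<Sum>j\<le>k. (card I + j - 1) choose j) = (\<Sum>j\<le>k. if j = 0 then 1 else 0)"
        using True by (intro sum.cong) auto
      then show ?thesis using True insert by simp
    next
      case False
      then obtain r where r: "card I = Suc r" by (cases "card I") auto
      have "(\<Sum>j\<le>k. (card I + j - 1) choose j) = (\<Sum>j\<le>k. (r + j) choose j)"
        using r by simp
      also have "\<dots> = Suc (r + k) choose k" by (rule sum_choose_lower)
      finally show ?thesis using r insert by simp
    qed
    finally show ?case .
  qed
qed

lemma aux_rearr: "complex_of_real A = of_nat C * complex_of_real F \<Longrightarrow>
   complex_of_real A * (ax * Pr) = of_nat C * ax * (complex_of_real F * Pr)"
  by (simp add: mult_ac)

lemma multinomial_TT:
  fixes a :: "'n::finite \<Rightarrow> complex"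
  shows "(\<Sum>\<kappa>\<in>TT I k. complex_of_real (fact k / (\<Prod>r\<in>I. fact (\<kappa> r))) * (\<Prod>r\<in>I. a r ^ \<kappa> r))
         = (\<Sum>r\<in>I. a r) ^ k"
proof -
  have "finite I" by simp
  thus ?thesis
  proof (induction I arbitrary: k rule: finite_induct)
    case empty then show ?case by (simp add: TT_empty)
  next
    case (insert x I)
    let ?S = "\<Sum>r\<in>I. a r"
    have "(\<Sum>\<kappa>\<in>TT (insert x I) k. complex_of_real (fact k / (\<Prod>r\<in>insert x I. fact (\<kappa> r))) * (\<Prod>r\<in>insert x I. a r ^ \<kappa> r))
        = (\<Sum>j\<le>k. \<Sum>\<kappa>\<in>TT I (k - j). complex_of_real (fact k / (\<Prod>r\<in>insert x I. fact ((\<kappa>(x := j)) r))) * (\<Prod>r\<in>insert x I. a r ^ (\<kappa>(x := j)) r))"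
      by (rule TT_insert_sum[OF insert(2)])
    also have "\<dots> = (\<Sum>j\<le>k. of_nat (k choose j) * a x ^ j * (\<Sum>\<kappa>\<in>TT I (k - j). complex_of_real (fact (k - j) / (\<Prod>r\<in>I. fact (\<kappa> r))) * (\<Prod>r\<in>I. a r ^ \<kappa> r)))"
    proof (intro sum.cong refl)
      fix j assume j: "j \<in> {..k}"
      show "(\<Sum>\<kappa>\<in>TT I (k - j). complex_of_real (fact k / (\<Prod>r\<in>insert x I. fact ((\<kappa>(x := j)) r))) * (\<Prod>r\<in>insert x I. a r ^ (\<kappa>(x := j)) r))
          = of_nat (k choose j) * a x ^ j * (\<Sum>\<kappa>\<in>TT I (k - j). complex_of_real (fact (k - j) / (\<Prod>r\<in>I. fact (\<kappa> r))) * (\<Prod>r\<in>I. a r ^ \<kappa> r))"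
        unfolding sum_distrib_left
      proof (intro sum.cong refl)
        fix \<kappa> assume "\<kappa> \<in> TT I (k - j)"
        have p1: "(\<Prod>r\<in>insert x I. fact ((\<kappa>(x := j)) r)) = fact j * (\<Prod>r\<in>I. fact (\<kappa> r) :: real)"
          using insert(1,2) by (simp add: prod.insert) (intro prod.cong, auto)
        have p2a: "(\<Prod>r\<in>I. a r ^ (\<kappa>(x := j)) r) = (\<Prod>r\<in>I. a r ^ \<kappa> r)"
          using insert(2) by (intro prod.cong) auto
        have p2: "(\<Prod>r\<in>insert x I. a r ^ (\<kappa>(x := j)) r) = a x ^ j * (\<Prod>r\<in>I. a r ^ \<kappa> r)"
          by (simp only: prod.insert[OF insert(1,2)] p2a fun_upd_same)
        have P: "(\<Prod>r\<in>I. fact (\<kappa> r) :: real) \<noteq> 0" by simp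
        have bf: "fact j * fact (k - j) * real (k choose j) = fact k"
          using arg_cong[OF binomial_fact_lemma[of j k], of real] j by (simp only: of_nat_mult of_nat_fact atMost_iff)
        have eqr: "fact k / (fact j * (\<Prod>r\<in>I. fact (\<kappa> r))) = real (k choose j) * (fact (k - j) / (\<Prod>r\<in>I. fact (\<kappa> r) :: real))"
          using P bf[symmetric] by (simp add: field_simps)
        show "complex_of_real (fact k / (\<Prod>r\<in>insert x I. fact ((\<kappa>(x := j)) r))) * (\<Prod>r\<in>insert x I. a r ^ (\<kappa>(x := j)) r)
          = of_nat (k choose j) * a x ^ j * (complex_of_real (fact (k - j) / (\<Prod>r\<in>I. fact (\<kappa> r))) * (\<Prod>r\<in>I. a r ^ \<kappa> r))"
          unfolding p1 p2 by (rule aux_rearr, simp only: eqr of_real_mult of_real_of_nat_eq)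
      qed
    qed
    also have "\<dots> = (\<Sum>j\<le>k. of_nat (k choose j) * a x ^ j * ?S ^ (k - j))"
      using insert(3) by simp
    also have "\<dots> = (a x + ?S) ^ k" by (rule binomial_ring[symmetric])
    also have "\<dots> = (\<Sum>r\<in>insert x I. a r) ^ k" using insert(1,2) by simp
    finally show ?case .
  qed
qed

lemma uvec_nth: "uvec B k \<kappa> $ t = complex_of_real (sqrt (multinom k \<kappa>)) * (\<Prod>r\<in>UNIV. (B $ r $ t) ^ (\<kappa> r))"
  unfolding uvec_def schur_pow_def by simp

lemma multinom_nonneg: "multinom k \<kappa> \<ge> 0"
  unfolding multinom_def by (simp add: prod_nonneg)

lemma cinner_col: "cinner (column s B) (column t B) = (\<Sum>r\<in>UNIV. cnj (B $ r $ s) * B $ r $ t)"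
  unfolding cinner_def column_def by simp

lemma aux4: "(c::complex) * c = M \<Longrightarrow> X * Y = Q \<Longrightarrow> (c * X) * (c * Y) = M * Q"
proof -
  assume "c * c = M" "X * Y = Q"
  moreover have "(c * X) * (c * Y) = (c * c) * (X * Y)" by (simp add: ac_simps)
  ultimately show ?thesis by simp
qed

lemma K1:
  fixes B :: "complex^'N::finite^'n::finite"
  shows "(\<Sum>\<kappa>\<in>tuples k. cnj (uvec B k \<kappa> $ s) * uvec B k \<kappa> $ t) = cinner (column s B) (column t B) ^ k"
proof -
  have "(\<Sum>\<kappa>\<in>tuples k. cnj (uvec B k \<kappa> $ s) * uvec B k \<kappa> $ t)
      = (\<Sum>\<kappa>\<in>TT UNIV k. complex_of_real (fact k / (\<Prod>r\<in>UNIV. fact (\<kappa> r))) * (\<Prod>r\<in>UNIV. (cnj (B $ r $ s) * B $ r $ t) ^ \<kappa> r))"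
    unfolding TT_UNIV
  proof (intro sum.cong refl)
    fix \<kappa> :: "'n \<Rightarrow> nat"
    have sq: "complex_of_real (sqrt (multinom k \<kappa>)) * complex_of_real (sqrt (multinom k \<kappa>)) = complex_of_real (multinom k \<kappa>)"
      using multinom_nonneg[of k \<kappa>] by (simp flip: of_real_mult)
    have pr: "cnj (\<Prod>r\<in>UNIV. (B $ r $ s) ^ (\<kappa> r)) * (\<Prod>r\<in>UNIV. (B $ r $ t) ^ (\<kappa> r)) = (\<Prod>r\<in>UNIV. (cnj (B $ r $ s) * B $ r $ t) ^ \<kappa> r)"
      by (simp add: cnj_prod prod.distrib[symmetric] power_mult_distrib)
    show "cnj (uvec B k \<kappa> $ s) * uvec B k \<kappa> $ t = complex_of_real (fact k / (\<Prod>r\<in>UNIV. fact (\<kappa> r))) * (\<Prod>r\<in>UNIV. (cnj (B $ r $ s) * B $ r $ t) ^ \<kappa> r)"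
      unfolding uvec_nth complex_cnj_mult complex_cnj_complex_of_real
      using aux4[OF sq pr] by (simp only: multinom_def)
  qed
  also have "\<dots> = cinner (column s B) (column t B) ^ k"
    unfolding cinner_col by (rule multinomial_TT)
  finally show ?thesis .
qed

lemma sum_swap4:
  "(\<Sum>a\<in>A. \<Sum>b\<in>B. \<Sum>c\<in>C. \<Sum>d\<in>D. f a b c d) = (\<Sum>c\<in>C. \<Sum>d\<in>D. \<Sum>a\<in>A. \<Sum>b\<in>B. (f a b c d :: 'z::comm_monoid_add))"
proof -
  have "(\<Sum>a\<in>A. \<Sum>b\<in>B. \<Sum>c\<in>C. \<Sum>d\<in>D. f a b c d) = (\<Sum>a\<in>A. \<Sum>c\<in>C. \<Sum>b\<in>B. \<Sum>d\<in>D. f a b c d)"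
    by (intro sum.cong refl sum.swap)
  also have "\<dots> = (\<Sum>a\<in>A. \<Sum>c\<in>C. \<Sum>d\<in>D. \<Sum>b\<in>B. f a b c d)"
    by (intro sum.cong refl sum.swap)
  also have "\<dots> = (\<Sum>c\<in>C. \<Sum>a\<in>A. \<Sum>d\<in>D. \<Sum>b\<in>B. f a b c d)"
    by (rule sum.swap)
  also have "\<dots> = (\<Sum>c\<in>C. \<Sum>d\<in>D. \<Sum>a\<in>A. \<Sum>b\<in>B. f a b c d)"
    by (intro sum.cong refl sum.swap)
  finally show ?thesis .
qed

lemma trace_eq:
  fixes B :: "complex^'N::finite^'n::finite"
  shows "(\<Sum>\<kappa>\<in>tuples k. cinner (uvec B k \<kappa>) (uvec B k \<kappa>)) = (\<Sum>i\<in>UNIV. cinner (column i B) (column i B) ^ k)"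
proof -
  have "(\<Sum>\<kappa>\<in>tuples k. cinner (uvec B k \<kappa>) (uvec B k \<kappa>)) = (\<Sum>\<kappa>\<in>tuples k. \<Sum>t\<in>UNIV. cnj (uvec B k \<kappa> $ t) * uvec B k \<kappa> $ t)"
    by (simp only: cinner_def)
  also have "\<dots> = (\<Sum>t\<in>UNIV. \<Sum>\<kappa>\<in>tuples k. cnj (uvec B k \<kappa> $ t) * uvec B k \<kappa> $ t)"
    by (rule sum.swap)
  also have "\<dots> = (\<Sum>i\<in>UNIV. cinner (column i B) (column i B) ^ k)"
    by (simp only: K1)
  finally show ?thesis .
qed

lemma frob_eq:
  fixes B :: "complex^'N::finite^'n::finite"
  shows "(\<Sum>\<kappa>\<in>tuples k. \<Sum>\<kappa>'\<in>tuples k. complex_of_real ((cmod (cinner (uvec B k \<kappa>) (uvec B k \<kappa>')))\<^sup>2))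
       = (\<Sum>s\<in>UNIV. \<Sum>t\<in>UNIV. complex_of_real ((cmod (cinner (column s B) (column t B) ^ k))\<^sup>2))"
proof -
  let ?u = "uvec B k"
  have "(\<Sum>\<kappa>\<in>tuples k. \<Sum>\<kappa>'\<in>tuples k. complex_of_real ((cmod (cinner (?u \<kappa>) (?u \<kappa>')))\<^sup>2))
      = (\<Sum>\<kappa>\<in>tuples k. \<Sum>\<kappa>'\<in>tuples k. \<Sum>s\<in>UNIV. \<Sum>t\<in>UNIV.
            (cnj (?u \<kappa> $ s) * ?u \<kappa> $ t) * (?u \<kappa>' $ s * cnj (?u \<kappa>' $ t)))"
  proof (intro sum.cong refl)
    fix \<kappa> \<kappa>'
    have "complex_of_real ((cmod (cinner (?u \<kappa>) (?u \<kappa>')))\<^sup>2) = cinner (?u \<kappa>) (?u \<kappa>') * cnj (cinner (?u \<kappa>) (?u \<kappa>'))"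
      by (rule complex_norm_square)
    also have "\<dots> = (\<Sum>s\<in>UNIV. cnj (?u \<kappa> $ s) * ?u \<kappa>' $ s) * (\<Sum>t\<in>UNIV. ?u \<kappa> $ t * cnj (?u \<kappa>' $ t))"
      by (simp add: cinner_def mult.commute)
    also have "\<dots> = (\<Sum>s\<in>UNIV. \<Sum>t\<in>UNIV. (cnj (?u \<kappa> $ s) * ?u \<kappa>' $ s) * (?u \<kappa> $ t * cnj (?u \<kappa>' $ t)))"
      by (rule sum_product)
    also have "\<dots> = (\<Sum>s\<in>UNIV. \<Sum>t\<in>UNIV. (cnj (?u \<kappa> $ s) * ?u \<kappa> $ t) * (?u \<kappa>' $ s * cnj (?u \<kappa>' $ t)))"
      by (intro sum.cong refl) (simp add: ac_simps)
    finally show "complex_of_real ((cmod (cinner (?u \<kappa>) (?u \<kappa>')))\<^sup>2) = (\<Sum>s\<in>UNIV. \<Sum>t\<in>UNIV.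
            (cnj (?u \<kappa> $ s) * ?u \<kappa> $ t) * (?u \<kappa>' $ s * cnj (?u \<kappa>' $ t)))" .
  qed
  also have "\<dots> = (\<Sum>s\<in>UNIV. \<Sum>t\<in>UNIV. \<Sum>\<kappa>\<in>tuples k. \<Sum>\<kappa>'\<in>tuples k.
            (cnj (?u \<kappa> $ s) * ?u \<kappa> $ t) * (?u \<kappa>' $ s * cnj (?u \<kappa>' $ t)))"
    by (rule sum_swap4)
  also have "\<dots> = (\<Sum>s\<in>UNIV. \<Sum>t\<in>UNIV. (\<Sum>\<kappa>\<in>tuples k. cnj (?u \<kappa> $ s) * ?u \<kappa> $ t) * (\<Sum>\<kappa>'\<in>tuples k. ?u \<kappa>' $ s * cnj (?u \<kappa>' $ t)))"
    by (simp only: sum_product)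
  also have "\<dots> = (\<Sum>s\<in>UNIV. \<Sum>t\<in>UNIV. (\<Sum>\<kappa>\<in>tuples k. cnj (?u \<kappa> $ s) * ?u \<kappa> $ t) * cnj (\<Sum>\<kappa>'\<in>tuples k. cnj (?u \<kappa>' $ s) * ?u \<kappa>' $ t))"
    by (simp add: mult.commute)
  also have "\<dots> = (\<Sum>s\<in>UNIV. \<Sum>t\<in>UNIV. complex_of_real ((cmod (cinner (column s B) (column t B) ^ k))\<^sup>2))"
    by (simp only: K1 complex_norm_square)
  finally show ?thesis .
qed

lemma abstract_eq:
  fixes a :: "'k \<Rightarrow> real" and g :: "'k \<Rightarrow> 'k \<Rightarrow> real"
  assumes fin: "finite A" and ne: "A \<noteq> {}" and gnn: "\<forall>x\<in>A. \<forall>y\<in>A. g x y \<ge> 0"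
    and gd: "\<forall>x\<in>A. g x x = (a x)\<^sup>2"
  shows "real (card A) * (\<Sum>x\<in>A. \<Sum>y\<in>A. g x y) = (\<Sum>x\<in>A. a x)\<^sup>2 \<longleftrightarrow>
     (\<forall>x\<in>A. \<forall>y\<in>A. a x = a y) \<and> (\<forall>x\<in>A. \<forall>y\<in>A. x \<noteq> y \<longrightarrow> g x y = 0)"
proof -
  define R where "R = (\<Sum>x\<in>A. \<Sum>y\<in>A. if x = y then 0 else g x y)"
  define Q where "Q = (\<Sum>x\<in>A. \<Sum>y\<in>A. (a x - a y)\<^sup>2)"
  have sp: "(\<Sum>x\<in>A. \<Sum>y\<in>A. g x y) = (\<Sum>x\<in>A. (a x)\<^sup>2) + R"
  proof -
    have "(\<Sum>x\<in>A. \<Sum>y\<in>A. g x y) = (\<Sum>x\<in>A. \<Sum>y\<in>A. (if x = y then (a x)\<^sup>2 else 0) + (if x = y then 0 else g x y))"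
      using gd by (intro sum.cong refl) auto
    also have "\<dots> = (\<Sum>x\<in>A. (a x)\<^sup>2) + R"
      unfolding R_def sum.distrib using fin by simp
    finally show ?thesis .
  qed
  have q: "Q = 2 * real (card A) * (\<Sum>x\<in>A. (a x)\<^sup>2) - 2 * (\<Sum>x\<in>A. a x)\<^sup>2"
  proof -
    have "Q = (\<Sum>x\<in>A. \<Sum>y\<in>A. ((a x)\<^sup>2 + (a y)\<^sup>2 - 2 * a x * a y))"
      unfolding Q_def by (simp add: power2_diff)
    also have "\<dots> = (\<Sum>x\<in>A. real (card A) * (a x)\<^sup>2 + (\<Sum>y\<in>A. (a y)\<^sup>2) - 2 * a x * (\<Sum>y\<in>A. a y))"
      by (simp add: sum.distrib sum_subtractf sum_distrib_left)
    also have "\<dots> = 2 * real (card A) * (\<Sum>x\<in>A. (a x)\<^sup>2) - 2 * (\<Sum>x\<in>A. a x)\<^sup>2"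
      by (simp add: sum.distrib sum_subtractf sum_distrib_left[symmetric] sum_distrib_right[symmetric] power2_eq_square)
    finally show ?thesis .
  qed
  have Qnn: "Q \<ge> 0" unfolding Q_def by (intro sum_nonneg) auto
  have Rnn: "R \<ge> 0" unfolding R_def using gnn by (intro sum_nonneg) auto
  have cp: "real (card A) > 0" using fin ne by (simp add: card_gt_0_iff)
  have key: "real (card A) * (\<Sum>x\<in>A. \<Sum>y\<in>A. g x y) - (\<Sum>x\<in>A. a x)\<^sup>2 = Q / 2 + real (card A) * R"
  proof -
    have "Q / 2 = real (card A) * (\<Sum>x\<in>A. (a x)\<^sup>2) - (\<Sum>x\<in>A. a x)\<^sup>2" using q by simp
    thus ?thesis unfolding sp by (simp add: algebra_simps)
  qed
  have "real (card A) * (\<Sum>x\<in>A. \<Sum>y\<in>A. g x y) = (\<Sum>x\<in>A. a x)\<^sup>2 \<longleftrightarrow> Q = 0 \<and> R = 0"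
  proof
    assume "real (card A) * (\<Sum>x\<in>A. \<Sum>y\<in>A. g x y) = (\<Sum>x\<in>A. a x)\<^sup>2"
    hence "Q / 2 + real (card A) * R = 0" using key by simp
    moreover have "real (card A) * R \<ge> 0" using cp Rnn by simp
    ultimately have "Q / 2 = 0" "real (card A) * R = 0" using Qnn by linarith+
    thus "Q = 0 \<and> R = 0" using cp by simp
  next
    assume "Q = 0 \<and> R = 0" thus "real (card A) * (\<Sum>x\<in>A. \<Sum>y\<in>A. g x y) = (\<Sum>x\<in>A. a x)\<^sup>2" using key by simp
  qed
  also have "Q = 0 \<longleftrightarrow> (\<forall>x\<in>A. \<forall>y\<in>A. a x = a y)"
  proof -
    have "Q = 0 \<longleftrightarrow> (\<forall>x\<in>A. (\<Sum>y\<in>A. (a x - a y)\<^sup>2) = 0)"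
      unfolding Q_def using fin by (intro sum_nonneg_eq_0_iff) (auto intro: sum_nonneg)
    also have "\<dots> \<longleftrightarrow> (\<forall>x\<in>A. \<forall>y\<in>A. (a x - a y)\<^sup>2 = 0)"
      using fin by (simp add: sum_nonneg_eq_0_iff)
    finally show ?thesis by simp
  qed
  also have "R = 0 \<longleftrightarrow> (\<forall>x\<in>A. \<forall>y\<in>A. x \<noteq> y \<longrightarrow> g x y = 0)"
  proof -
    have "R = 0 \<longleftrightarrow> (\<forall>x\<in>A. (\<Sum>y\<in>A. if x = y then 0 else g x y) = 0)"
      unfolding R_def using fin gnn by (intro sum_nonneg_eq_0_iff) (auto intro: sum_nonneg)
    also have "\<dots> \<longleftrightarrow> (\<forall>x\<in>A. \<forall>y\<in>A. (if x = y then 0 else g x y) = 0)"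
      using fin gnn by (simp add: sum_nonneg_eq_0_iff)
    finally show ?thesis by auto
  qed
  finally show ?thesis .
qed

theorem theorem4:
  fixes B :: "complex^'N::finite^'n::finite" and k :: nat
  assumes "k \<ge> 1"
  shows "complex_of_real (real ((CARD('n) + k - 1) choose k) *
            (\<Sum>i\<in>UNIV. \<Sum>j\<in>UNIV. (cmod (cinner (column i B) (column j B))) ^ (2 * k)))
           = (\<Sum>i\<in>UNIV. (cinner (column i B) (column i B)) ^ k) ^ 2
    \<longleftrightarrow> ((\<forall>\<kappa>\<in>tuples k. \<forall>\<kappa>'\<in>tuples k. clen (uvec B k \<kappa>) = clen (uvec B k \<kappa>')) \<and>
         (\<forall>\<kappa>\<in>tuples k. \<forall>\<kappa>'\<in>tuples k. \<kappa> \<noteq> \<kappa>' \<longrightarrow> cinner (uvec B k \<kappa>) (uvec B k \<kappa>') = 0))"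
proof -
  let ?u = "uvec B k"
  define a where "a \<kappa> = (\<Sum>t\<in>UNIV. (cmod (?u \<kappa> $ t))\<^sup>2)" for \<kappa>
  define g where "g \<kappa> \<kappa>' = (cmod (cinner (?u \<kappa>) (?u \<kappa>')))\<^sup>2" for \<kappa> \<kappa>'
  have finD: "finite (tuples k :: ('n \<Rightarrow> nat) set)" using TT_finite[of UNIV k] by (simp only: TT_UNIV)
  have cardD: "card (tuples k :: ('n \<Rightarrow> nat) set) = (CARD('n) + k - 1) choose k"
    using TT_card[of "UNIV :: 'n set" k] by (simp only: TT_UNIV)
  have "CARD('n) > 0" by simp
  hence "(CARD('n) + k - 1) choose k > 0" by (intro zero_less_binomial) linarith
  hence neD: "(tuples k :: ('n \<Rightarrow> nat) set) \<noteq> {}" using cardD by force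
  have ci: "cinner (?u \<kappa>) (?u \<kappa>) = complex_of_real (a \<kappa>)" for \<kappa>
    unfolding cinner_def a_def of_real_sum
    by (intro sum.cong refl) (subst complex_norm_square, rule mult.commute)
  have gd: "\<forall>x\<in>tuples k. g x x = (a x)\<^sup>2"
    unfolding g_def ci by simp
  have gnn: "\<forall>x\<in>tuples k. \<forall>y\<in>tuples k. g x y \<ge> 0" unfolding g_def by simp
  have cl: "clen (?u \<kappa>) = sqrt (a \<kappa>)" for \<kappa> unfolding clen_def a_def by simp
  have tr: "(\<Sum>i\<in>UNIV. (cinner (column i B) (column i B)) ^ k) = complex_of_real (\<Sum>\<kappa>\<in>tuples k. a \<kappa>)"
    unfolding trace_eq[symmetric] of_real_sum ci ..
  have fr: "(\<Sum>i\<in>UNIV. \<Sum>j\<in>UNIV. (cmod (cinner (column i B) (column j B))) ^ (2 * k)) = (\<Sum>\<kappa>\<in>tuples k. \<Sum>\<kappa>'\<in>tuples k. g \<kappa> \<kappa>')"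
  proof -
    have "complex_of_real (\<Sum>i\<in>UNIV. \<Sum>j\<in>UNIV. (cmod (cinner (column i B) (column j B))) ^ (2 * k))
        = (\<Sum>s\<in>UNIV. \<Sum>t\<in>UNIV. complex_of_real ((cmod (cinner (column s B) (column t B) ^ k))\<^sup>2))"
      unfolding of_real_sum norm_power power_mult[symmetric] by (simp add: mult.commute)
    also have "\<dots> = complex_of_real (\<Sum>\<kappa>\<in>tuples k. \<Sum>\<kappa>'\<in>tuples k. g \<kappa> \<kappa>')"
      unfolding frob_eq[symmetric] of_real_sum g_def ..
    finally show ?thesis by (simp only: of_real_eq_iff)
  qed
  have lhs: "complex_of_real (real ((CARD('n) + k - 1) choose k) *
            (\<Sum>i\<in>UNIV. \<Sum>j\<in>UNIV. (cmod (cinner (column i B) (column j B))) ^ (2 * k)))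
           = (\<Sum>i\<in>UNIV. (cinner (column i B) (column i B)) ^ k) ^ 2 \<longleftrightarrow>
        real (card (tuples k :: ('n \<Rightarrow> nat) set)) * (\<Sum>\<kappa>\<in>tuples k. \<Sum>\<kappa>'\<in>tuples k. g \<kappa> \<kappa>') = (\<Sum>\<kappa>\<in>tuples k. a \<kappa>)\<^sup>2"
    unfolding tr fr cardD of_real_power[symmetric] of_real_eq_iff ..
  have r1: "(\<forall>\<kappa>\<in>tuples k. \<forall>\<kappa>'\<in>tuples k. clen (?u \<kappa>) = clen (?u \<kappa>')) \<longleftrightarrow> (\<forall>x\<in>tuples k. \<forall>y\<in>tuples k. a x = a y)"
    unfolding cl by simp
  have r2: "(\<forall>\<kappa>\<in>tuples k. \<forall>\<kappa>'\<in>tuples k. \<kappa> \<noteq> \<kappa>' \<longrightarrow> cinner (?u \<kappa>) (?u \<kappa>') = 0) \<longleftrightarrow> (\<forall>x\<in>tuples k. \<forall>y\<in>tuples k. x \<noteq> y \<longrightarrow> g x y = 0)"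
    unfolding g_def by simp
  show ?thesis unfolding lhs r1 r2 by (rule abstract_eq[OF finD neD gnn gd])
qed

end
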